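(* Let $X=\{x_1,\dots,x_n\}\subset\mathbb{R}^m$ be a dataset, let $S=\{S_1,\dots,S_k\}$ be a partition of $X$ into clusters with centroids $z_1,\dots,z_k\in\mathbb{R}^m$, and let $p>1$. Suppose the features of $X$ consist of at least one relevant feature and at least one noise feature, and that each noise feature is drawn independently from a common distribution. Then, for a cluster $S_l$ and exponent $p>1$, at least one feature $v$ has weight strictly higher than $\frac{1}{m}$, i.e. $w_{lv}^{(p)}>\frac{1}{m}$.
   Context: For a cluster $S_l$ with centroid $z_l$, a feature $v$ and an exponent $p>1$, the within-cluster dispersion is $D_{lv}^{(p)}=\sum_{x_i\in S_l}|x_{iv}-z_{lv}|^p$ (assumed positive), and the Minkowski weighted $k$-means feature weight is \[ w_{lv}^{(p)}=\frac{1}{\sum_{u=1}^m\left(\frac{D_{lv}^{(p)}}{D_{lu}^{(p)}}\right)^{\frac{1}{p-1}}}, \] so that $\sum_{v=1}^m w_{lv}^{(p)}=1$ for each $l$. The features are partitioned into a set $R$ of relevant features and a set of noise features, where a feature $v$ is a noise feature if for each cluster $S_l$ and each $p>1$, $\frac{1}{|R|}\sum_{u\in R}(D_{lv}^{(p)}/D_{lu}^{(p)})^{1/(p-1)}>1$. *)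

theory Defs
  imports Complex_Main
begin

text \<open>Data: x i v is feature v of point i (points 0..<n, features 0..<m).
  Clusters: S l (l < k) is a set of point indices; z l v is feature v of centroid l.\<close>

definition dispersion ::
  "(nat \<Rightarrow> nat \<Rightarrow> real) \<Rightarrow> (nat \<Rightarrow> nat set) \<Rightarrow> (nat \<Rightarrow> nat \<Rightarrow> real)
     \<Rightarrow> nat \<Rightarrow> nat \<Rightarrow> real \<Rightarrow> real" where
  "dispersion x S z l v p = (\<Sum>i\<in>S l. \<bar>x i v - z l v\<bar> powr p)"

definition mwk_weight ::
  "nat \<Rightarrow> (nat \<Rightarrow> nat \<Rightarrow> real) \<Rightarrow> (nat \<Rightarrow> nat set) \<Rightarrow> (nat \<Rightarrow> nat \<Rightarrow> real)
     \<Rightarrow> nat \<Rightarrow> nat \<Rightarrow> real \<Rightarrow> real" where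
  "mwk_weight m x S z l v p =
     1 / (\<Sum>u<m. (dispersion x S z l v p / dispersion x S z l u p) powr (1 / (p - 1)))"

definition is_partition :: "nat \<Rightarrow> nat \<Rightarrow> (nat \<Rightarrow> nat set) \<Rightarrow> bool" where
  "is_partition n k S \<longleftrightarrow>
     (\<forall>l<k. S l \<noteq> {}) \<and>
     (\<forall>l<k. \<forall>l'<k. l \<noteq> l' \<longrightarrow> S l \<inter> S l' = {}) \<and>
     (\<Union>l<k. S l) = {..<n}"

definition is_noise_feature ::
  "nat \<Rightarrow> (nat \<Rightarrow> nat \<Rightarrow> real) \<Rightarrow> (nat \<Rightarrow> nat set) \<Rightarrow> (nat \<Rightarrow> nat \<Rightarrow> real)
     \<Rightarrow> nat set \<Rightarrow> nat \<Rightarrow> bool" where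
  "is_noise_feature k x S z R v \<longleftrightarrow>
     (\<forall>l<k. \<forall>p::real. p > 1 \<longrightarrow>
        (1 / real (card R)) * (\<Sum>u\<in>R. (dispersion x S z l v p / dispersion x S z l u p) powr (1 / (p - 1))) > 1)"

end

theory Submission
  imports Defs
begin

theorem mainTheorem2:
  fixes n m k :: nat
    and x :: "nat \<Rightarrow> nat \<Rightarrow> real"
    and S :: "nat \<Rightarrow> nat set"
    and z :: "nat \<Rightarrow> nat \<Rightarrow> real"
    and R :: "nat set"
    and l :: nat and p :: real
  assumes partition: "is_partition n k S"
    and disp_pos: "\<forall>l'<k. \<forall>v<m. \<forall>q::real. q > 1 \<longrightarrow> dispersion x S z l' v q > 0"
    and R_sub: "R \<subseteq> {..<m}"
    and R_ne: "R \<noteq> {}"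
    and noise_ex: "{..<m} - R \<noteq> {}"
    and noise: "\<forall>v\<in>{..<m} - R. is_noise_feature k x S z R v"
    and l: "l < k"
    and p: "p > 1"
  shows "\<exists>v<m. mwk_weight m x S z l v p > 1 / real m"
proof -
  define D where "D u = dispersion x S z l u p" for u
  define a where "a = 1 / (p - 1)"
  have a: "a > 0" using p by (simp add: a_def)
  have Dpos: "\<And>u. u < m \<Longrightarrow> D u > 0" using disp_pos l p by (simp add: D_def)
  obtain v where v: "v < m" "v \<notin> R" using noise_ex by blast
  have m0: "m > 0" using v by simp
  obtain u0 where u0: "u0 \<in> {..<m}" "\<And>u. u \<in> {..<m} \<Longrightarrow> D u0 \<le> D u"
  proof -
    have "finite (D ` {..<m})" "D ` {..<m} \<noteq> {}" using m0 by auto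
    hence "Min (D ` {..<m}) \<in> D ` {..<m}" by (rule Min_in)
    then obtain u0 where "u0 \<in> {..<m}" "D u0 = Min (D ` {..<m})" by auto
    thus ?thesis using that by auto
  qed
  have nf: "(1 / real (card R)) * (\<Sum>u\<in>R. (D v / D u) powr a) > 1"
    using noise v l p unfolding is_noise_feature_def D_def a_def by auto
  have finR: "finite R" using R_sub finite_subset by blast
  have cR: "card R > 0" using finR R_ne by (simp add: card_gt_0_iff)
  have "\<exists>u\<in>R. D v > D u"
  proof (rule ccontr)
    assume nt: "\<not> (\<exists>u\<in>R. D v > D u)"
    have "\<forall>u\<in>R. (D v / D u) powr a \<le> 1"
    proof
      fix u assume uR: "u \<in> R"
      have um: "u < m" using uR R_sub by auto
      have "D v \<le> D u" using nt uR by auto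
      hence "D v / D u \<le> 1" using Dpos[OF um] by simp
      moreover have "D v / D u \<ge> 0" using Dpos[OF um] Dpos[OF v(1)] by (simp add: less_imp_le)
      ultimately show "(D v / D u) powr a \<le> 1" using a powr_mono2[of a "D v / D u" 1] by simp
    qed
    hence "(\<Sum>u\<in>R. (D v / D u) powr a) \<le> real (card R)"
      using sum_mono[of R "\<lambda>u. (D v / D u) powr a" "\<lambda>_. 1"] by simp
    hence "(1 / real (card R)) * (\<Sum>u\<in>R. (D v / D u) powr a) \<le> 1"
      using cR by (simp add: divide_le_eq_1 )
    thus False using nf by simp
  qed
  then obtain u where "u \<in> R" "D v > D u" by blast
  hence vgt: "D v > D u0" using u0 R_sub by fastforce
  have le1: "\<forall>w\<in>{..<m}. (D u0 / D w) powr a \<le> 1"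
  proof
    fix w assume w: "w \<in> {..<m}"
    have "D u0 / D w \<le> 1" using u0(2)[OF w] Dpos w by simp
    moreover have "D u0 / D w \<ge> 0" using Dpos w u0 by (simp add: less_imp_le)
    ultimately show "(D u0 / D w) powr a \<le> 1" using a powr_mono2[of a "D u0 / D w" 1] by simp
  qed
  have "(D u0 / D v) powr a < 1"
  proof -
    have "D u0 / D v < 1" using vgt Dpos v by simp
    moreover have "D u0 / D v \<ge> 0" using Dpos v u0 by (simp add: less_imp_le)
    ultimately show ?thesis using a powr_less_mono2[of a "D u0 / D v" 1] by simp
  qed
  hence slt: "(\<Sum>w<m. (D u0 / D w) powr a) < (\<Sum>w<m. 1)"
    using le1 v by (intro sum_strict_mono_ex1) auto
  have spos: "(\<Sum>w<m. (D u0 / D w) powr a) > 0"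
  proof -
    have "(D u0 / D u0) powr a = 1" using Dpos[of u0] u0(1) by simp
    hence "(D u0 / D u0) powr a \<le> (\<Sum>w<m. (D u0 / D w) powr a)"
      using u0(1) by (intro member_le_sum) auto
    thus ?thesis using \<open>(D u0 / D u0) powr a = 1\<close> by simp
  qed
  have "1 / real m < 1 / (\<Sum>w<m. (D u0 / D w) powr a)"
    using slt spos by (simp add: frac_less2)
  thus ?thesis using u0(1) unfolding mwk_weight_def D_def a_def by auto
qed

end
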